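(* Let $C_1=\{(x,y)\in\mathbb{Z}^2: x\ge0,\ |y|\le x\}$ and $\alpha>0$. Then the divisible sandpile $s_0=(1+\alpha)\mathbf 1_{C_1}$ on the square lattice $\mathbb{Z}^2$ does not stabilize.
   Context: $\mathbb{Z}^2$ has its nearest-neighbour graph structure, $\Delta u(x)=\sum_{y\sim x}(u(y)-u(x))$. $s$ stabilizes if there exists $f:\mathbb{Z}^2\to[0,\infty)$ with $s+\Delta f\le1$ pointwise. *)

theory Defs
  imports Main "HOL.Real"
begin

definition nbrs :: "int \<times> int \<Rightarrow> (int \<times> int) set" where
  "nbrs p = {(fst p + 1, snd p), (fst p - 1, snd p), (fst p, snd p + 1), (fst p, snd p - 1)}"

definition lap :: "(int \<times> int \<Rightarrow> real) \<Rightarrow> int \<times> int \<Rightarrow> real" where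
  "lap u x = (\<Sum>y\<in>nbrs x. (u y - u x))"

definition stabilizes :: "(int \<times> int \<Rightarrow> real) \<Rightarrow> bool" where
  "stabilizes s \<longleftrightarrow> (\<exists>f. (\<forall>x. f x \<ge> 0) \<and> (\<forall>x. s x + lap f x \<le> 1))"

definition C1 :: "(int \<times> int) set" where
  "C1 = {(x, y). x \<ge> 0 \<and> \<bar>y\<bar> \<le> x}"

end

theory Submission
  imports Defs Complex_Main
begin

lemma lap_expand: "lap u (a,b) = u(a+1,b)+u(a-1,b)+u(a,b+1)+u(a,b-1) - 4*u(a,b)"
  unfolding lap_def nbrs_def by (simp add: algebra_simps)

definition hfun :: "real \<Rightarrow> int \<times> int \<Rightarrow> real" where
  "hfun K p = real_of_int ((fst p + 1)^2 - (snd p)^2) * (ln K - ln (2 * real_of_int (fst p) + 3))"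

lemma lap_h:
  assumes "\<bar>b\<bar> \<le> a"
  shows "lap (hfun K) (a,b) \<ge> -4"
proof -
  define X where "X = real_of_int a"
  define Y where "Y = real_of_int b"
  have ib: "b^2 \<le> a^2"
  proof -
    have "\<bar>b\<bar>^2 \<le> a^2" using assms by (intro power_mono) auto
    thus ?thesis by simp
  qed
  have X0: "X \<ge> 0" using assms unfolding X_def by simp
  have YX: "Y^2 \<le> X^2" unfolding X_def Y_def using ib
    by (metis of_int_le_iff of_int_power)
  define L1 where "L1 = ln (2*X+5)"
  define L0 where "L0 = ln (2*X+3)"
  define Lm where "Lm = ln (2*X+1)"
  have e: "lap (hfun K) (a,b) = (X^2 - Y^2) * (2*L0 - L1 - Lm) - (4*X+4)*(L1 - L0)"
    unfolding lap_expand hfun_def L1_def L0_def Lm_def X_def Y_def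
    by (simp add: algebra_simps power2_eq_square)
  have gap: "2*L0 - L1 - Lm \<ge> 0"
  proof -
    have "(2*X+5)*(2*X+1) \<le> (2*X+3)*(2*X+3)" by (simp add: algebra_simps)
    hence "ln ((2*X+5)*(2*X+1)) \<le> ln ((2*X+3)*(2*X+3))" using X0 by simp
    thus ?thesis unfolding L1_def L0_def Lm_def using X0 by (simp add: ln_mult)
  qed
  have d: "L1 - L0 \<le> 2/(2*X+3)"
  proof -
    have "L1 - L0 = ln ((2*X+5)/(2*X+3))" unfolding L1_def L0_def using X0 by (simp add: ln_div)
    also have "\<dots> \<le> (2*X+5)/(2*X+3) - 1" using X0 by (intro ln_le_minus_one) simp
    also have "\<dots> = 2/(2*X+3)" using X0 by (simp add: field_simps)
    finally show ?thesis .
  qed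
  have "(4*X+4)*(L1 - L0) \<le> (4*X+4)*(2/(2*X+3))" using d X0 by (intro mult_left_mono) auto
  also have "\<dots> \<le> 4" using X0 by (simp add: field_simps)
  finally have t1: "(4*X+4)*(L1 - L0) \<le> 4" .
  have t2: "(X^2 - Y^2) * (2*L0 - L1 - Lm) \<ge> 0" using YX gap by simp
  show ?thesis using e t1 t2 by linarith
qed

lemma h_ext:
  assumes K: "K > 0" and z: "\<bar>b\<bar> \<le> a" "2 * real_of_int a + 3 < K"
    and q: "q \<in> nbrs (a,b)"
    and nD: "\<not> (\<bar>snd q\<bar> \<le> fst q \<and> 2 * real_of_int (fst q) + 3 < K)"
  shows "hfun K q \<le> 0"
proof -
  consider "q = (a+1,b)" | "q = (a-1,b)" | "q = (a,b+1)" | "q = (a,b-1)"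
    using q unfolding nbrs_def by auto
  thus ?thesis
  proof cases
    case 1
    hence Kl: "K \<le> 2 * real_of_int a + 5" using nD z by auto
    have "ln K \<le> ln (2 * real_of_int a + 5)" using Kl K by simp
    hence g: "ln K - ln (2 * real_of_int (a+1) + 3) \<le> 0" by (simp add: algebra_simps)
    have ib: "b^2 \<le> (a+2)^2"
    proof -
      have "\<bar>b\<bar>^2 \<le> (a+2)^2" using z by (intro power_mono) auto
      thus ?thesis by simp
    qed
    have "(a+1 + 1)^2 - b^2 \<ge> 0" using ib by (simp add: algebra_simps)
    hence "real_of_int ((a+1 + 1)^2 - b^2) \<ge> 0" by (simp only: of_int_0_le_iff)
    thus ?thesis unfolding hfun_def using 1 g by (simp add: mult_nonneg_nonpos)
  next
    case 2
    have "\<bar>b\<bar> = a" using nD z 2 by auto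
    hence "(a - 1 + 1)^2 - b^2 = 0" by (metis add_diff_cancel_right' diff_add_cancel diff_self power2_abs)
    thus ?thesis unfolding hfun_def using 2 by simp
  next
    case 3
    have "\<bar>b+1\<bar> = a + 1" using nD z 3 by auto
    hence "(a + 1)^2 - (b+1)^2 = 0" by (metis diff_self power2_abs)
    thus ?thesis unfolding hfun_def using 3 by simp
  next
    case 4
    have "\<bar>b-1\<bar> = a + 1" using nD z 4 by auto
    hence "(a + 1)^2 - (b-1)^2 = 0" by (metis diff_self power2_abs)
    thus ?thesis unfolding hfun_def using 4 by simp
  qed
qed

lemma lap_diff: "lap (\<lambda>p. f p - c * g p) x = lap f x - c * lap g x"
proof -
  have "lap (\<lambda>p. f p - c * g p) x = (\<Sum>y\<in>nbrs x. (f y - f x) - c * (g y - g x))"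
    unfolding lap_def by (rule sum.cong) (auto simp: algebra_simps)
  also have "\<dots> = lap f x - c * lap g x"
    unfolding lap_def by (simp only: sum_subtractf sum_distrib_left[symmetric])
  finally show ?thesis .
qed

theorem lemma6p1:
  fixes \<alpha> :: real
  assumes "\<alpha> > 0"
  shows "\<not> stabilizes (\<lambda>p. if p \<in> C1 then 1 + \<alpha> else 0)"
proof
  assume "stabilizes (\<lambda>p. if p \<in> C1 then 1 + \<alpha> else 0)"
  then obtain f where f0: "\<And>x. f x \<ge> 0"
    and fs: "\<And>x. (if x \<in> C1 then 1 + \<alpha> else 0) + lap f x \<le> 1"
    unfolding stabilizes_def by blast
  define \<beta> where "\<beta> = \<alpha> / 8"
  have b0: "\<beta> > 0" using assms unfolding \<beta>_def by simp
  define K where "K = 3 * exp ((f (0,0) + 1) / \<beta>)"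
  have "exp ((f (0,0) + 1) / \<beta>) > 1" using b0 f0[of "(0,0)"] by simp
  hence K3: "K > 3" unfolding K_def by simp
  define D where "D = {p. \<bar>snd p\<bar> \<le> fst p \<and> 2 * real_of_int (fst p) + 3 < K}"
  define w where "w = (\<lambda>p. f p - \<beta> * hfun K p)"
  define M where "M = \<lceil>K\<rceil>"
  have "D \<subseteq> {0..M} \<times> {-M..M}"
  proof
    fix p assume "p \<in> D"
    hence a: "\<bar>snd p\<bar> \<le> fst p" "2 * real_of_int (fst p) + 3 < K" unfolding D_def by auto
    have "real_of_int (fst p) \<le> K" using a by linarith
    hence "fst p \<le> M" unfolding M_def by linarith
    thus "p \<in> {0..M} \<times> {-M..M}" using a by (cases p) auto
  qed
  hence finD: "finite D" by (rule finite_subset) simp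
  have pos: "\<forall>p\<in>D. w p \<ge> 0"
  proof (rule ccontr)
    assume "\<not> (\<forall>p\<in>D. w p \<ge> 0)"
    then obtain p where pD: "p \<in> D" and wp: "w p < 0" by auto
    define z where "z = arg_min_on w D"
    have zD: "z \<in> D" and zmin: "\<And>q. q \<in> D \<Longrightarrow> w z \<le> w q"
      using arg_min_if_finite[OF finD, of w] pD unfolding z_def by (auto simp: not_less)
    have wz: "w z < 0" using zmin[OF pD] wp by simp
    obtain a b where zab: "z = (a,b)" by (cases z)
    have za: "\<bar>b\<bar> \<le> a" "2 * real_of_int a + 3 < K" using zD zab unfolding D_def by auto
    have "0 \<le> lap w z"
      unfolding lap_def
    proof (rule sum_nonneg)
      fix q assume q: "q \<in> nbrs z"
      show "0 \<le> w q - w z"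
      proof (cases "q \<in> D")
        case True thus ?thesis using zmin by simp
      next
        case False
        have "hfun K q \<le> 0"
          using h_ext[of K b a q] K3 za q False zab unfolding D_def by auto
        hence "w q \<ge> 0" unfolding w_def using f0[of q] b0
          by (smt (verit) mult_nonneg_nonpos less_imp_le)
        thus ?thesis using wz by simp
      qed
    qed
    moreover have "lap w z = lap f z - \<beta> * lap (hfun K) z" unfolding w_def by (rule lap_diff)
    moreover have "z \<in> C1" using za zab unfolding C1_def by auto
    hence "lap f z \<le> - \<alpha>" using fs[of z] by simp
    moreover have "lap (hfun K) z \<ge> -4" using lap_h[OF za(1)] zab by simp
    moreover have "\<beta> * lap (hfun K) z \<ge> \<beta> * (-4)"
      using lap_h[OF za(1)] zab b0 by (intro mult_left_mono) auto
    ultimately show False using b0 assms unfolding \<beta>_def by linarith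
  qed
  have "(0,0) \<in> D" using K3 unfolding D_def by simp
  hence "w (0,0) \<ge> 0" using pos by blast
  moreover have "hfun K (0,0) = ln K - ln 3" unfolding hfun_def by simp
  moreover have "ln K - ln 3 = (f (0,0) + 1) / \<beta>" unfolding K_def by (simp add: ln_mult)
  ultimately show False unfolding w_def using b0 by (simp add: field_simps)
qed

end
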